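(* For every $n\ge3$ with $n\neq6$, $\operatorname{sdim}C_n=2$, while $\operatorname{sdim}C_6=3$.
   Context: $C_n$ is the cycle graph on $n$ vertices. A unit-distance embedding of a graph $G$ in $\mathbb{R}^n$ is an injective map $f$ from the vertex set of $G$ to $\mathbb{R}^n$ such that $|f(u)-f(v)|=1$ for every edge $uv$ and no point $f(w)$ lies on the segment $[f(u),f(v)]$ for an edge $uv$ with $w\notin\{u,v\}$ (edges may cross one another). $G$ admits a spherical embedding of dimension $k$ and radius $r$ if $G$ has a unit-distance embedding in $\mathbb{R}^k$ all of whose vertices lie on a sphere $\{x\in\mathbb{R}^k:|x-c|=r\}$. The spherical dimension $\operatorname{sdim}G$ is the least $k$ such that $G$ admits a spherical embedding of dimension $k$ and some radius $r<1$. *)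

theory Defs
  imports Complex_Main
begin

text \<open>Points of R^k are represented as functions nat => real vanishing at all
coordinates i >= k (the dimension k varies inside the statement).\<close>

definition in_Rk :: "nat \<Rightarrow> (nat \<Rightarrow> real) \<Rightarrow> bool" where
  "in_Rk k x \<longleftrightarrow> (\<forall>i\<ge>k. x i = 0)"

definition edist :: "nat \<Rightarrow> (nat \<Rightarrow> real) \<Rightarrow> (nat \<Rightarrow> real) \<Rightarrow> real" where
  "edist k x y = sqrt (\<Sum>i<k. (x i - y i)^2)"

definition on_segment :: "(nat \<Rightarrow> real) \<Rightarrow> (nat \<Rightarrow> real) \<Rightarrow> (nat \<Rightarrow> real) \<Rightarrow> bool" where
  "on_segment p a b \<longleftrightarrow> (\<exists>t::real. 0 \<le> t \<and> t \<le> 1 \<and> p = (\<lambda>i. (1 - t) * a i + t * b i))"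

text \<open>A graph is given by a vertex set V and a set E of (unordered, given as ordered pairs) edges.\<close>

definition unit_dist_emb ::
  "'a set \<Rightarrow> ('a \<times> 'a) set \<Rightarrow> nat \<Rightarrow> ('a \<Rightarrow> nat \<Rightarrow> real) \<Rightarrow> bool" where
  "unit_dist_emb V E k f \<longleftrightarrow>
     (\<forall>v\<in>V. in_Rk k (f v)) \<and> inj_on f V \<and>
     (\<forall>(u,v)\<in>E. edist k (f u) (f v) = 1) \<and>
     (\<forall>(u,v)\<in>E. \<forall>w\<in>V. w \<noteq> u \<and> w \<noteq> v \<longrightarrow> \<not> on_segment (f w) (f u) (f v))"

definition spherical_emb ::
  "'a set \<Rightarrow> ('a \<times> 'a) set \<Rightarrow> nat \<Rightarrow> real \<Rightarrow> bool" where
  "spherical_emb V E k r \<longleftrightarrow>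
     (\<exists>f c. unit_dist_emb V E k f \<and> in_Rk k c \<and> (\<forall>v\<in>V. edist k (f v) c = r))"

definition sdim :: "'a set \<Rightarrow> ('a \<times> 'a) set \<Rightarrow> nat" where
  "sdim V E = (LEAST k. \<exists>r<1. spherical_emb V E k r)"

definition cycle_V :: "nat \<Rightarrow> nat set" where
  "cycle_V n = {..<n}"

definition cycle_E :: "nat \<Rightarrow> (nat \<times> nat) set" where
  "cycle_E n = {(i, (i + 1) mod n) | i. i < n}"

end

theory Submission
  imports Defs
begin


lemma edist_sq: "(edist k x y)^2 = (\<Sum>i<k. (x i - y i)^2)"
  unfolding edist_def by (simp add: sum_nonneg)

lemma edist_eq_sq: "edist k x y = r \<Longrightarrow> (\<Sum>i<k. (x i - y i)^2) = r^2"
  using edist_sq by metis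

lemma in_Rk_eq: assumes "in_Rk k x" "in_Rk k y" "\<forall>i<k. x i = y i" shows "x = y"
proof
  fix i show "x i = y i" using assms unfolding in_Rk_def by (cases "i < k") auto
qed

lemma edist_zero: assumes "in_Rk k x" "in_Rk k y" "edist k x y = 0" shows "x = y"
proof -
  have "(\<Sum>i<k. (x i - y i)^2) = 0" using edist_eq_sq[OF assms(3)] by simp
  then have "\<forall>i\<in>{..<k}. (x i - y i)^2 = 0" by (subst (asm) sum_nonneg_eq_0_iff) auto
  then show ?thesis using in_Rk_eq[OF assms(1,2)] by auto
qed

lemma sphere_seg:
  assumes ina: "in_Rk k a" and inb: "in_Rk k b"
    and ea: "edist k a c = r" and eb: "edist k b c = r" and ep: "edist k p c = r"
    and seg: "on_segment p a b" and ab: "a \<noteq> b"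
  shows "p = a \<or> p = b"
proof -
  obtain t where t: "0 \<le> t" "t \<le> 1" and p: "p = (\<lambda>i. (1 - t) * a i + t * b i)"
    using seg unfolding on_segment_def by blast
  have "(\<Sum>i<k. (p i - c i)^2) = (\<Sum>i<k. (1-t)*(a i - c i)^2 + t*(b i - c i)^2 - t*(1-t)*(a i - b i)^2)"
    by (rule sum.cong) (auto simp: p algebra_simps power2_eq_square)
  also have "\<dots> = (1-t)*(\<Sum>i<k. (a i - c i)^2) + t*(\<Sum>i<k. (b i - c i)^2) - t*(1-t)*(\<Sum>i<k. (a i - b i)^2)"
    by (simp add: sum.distrib sum_subtractf sum_distrib_left)
  finally have "t*(1-t)*(\<Sum>i<k. (a i - b i)^2) = 0"
    using edist_eq_sq[OF ea] edist_eq_sq[OF eb] edist_eq_sq[OF ep] by (simp add: algebra_simps)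
  moreover have "(\<Sum>i<k. (a i - b i)^2) \<noteq> 0"
  proof
    assume "(\<Sum>i<k. (a i - b i)^2) = 0"
    then have "edist k a b = 0" unfolding edist_def by simp
    then show False using edist_zero[OF ina inb] ab by simp
  qed
  ultimately have "t = 0 \<or> t = 1" by simp
  then show ?thesis using p by auto
qed

lemma edist_mono: assumes "in_Rk k x" "in_Rk k y" "k \<le> k'" shows "edist k' x y = edist k x y"
proof -
  have u: "{..<k'} = {..<k} \<union> {k..<k'}" using assms(3) by auto
  have "(\<Sum>i<k'. (x i - y i)^2) = (\<Sum>i<k. (x i - y i)^2) + (\<Sum>i\<in>{k..<k'}. (x i - y i)^2)"
    unfolding u by (rule sum.union_disjoint) auto
  moreover have "(\<Sum>i\<in>{k..<k'}. (x i - y i)^2) = 0"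
    using assms(1,2) unfolding in_Rk_def by (intro sum.neutral) auto
  ultimately show ?thesis unfolding edist_def by simp
qed

lemma in_Rk_mono: "in_Rk k x \<Longrightarrow> k \<le> k' \<Longrightarrow> in_Rk k' x"
  unfolding in_Rk_def by auto

lemma emb_mono: assumes "spherical_emb V E k r" "k \<le> k'" and EV: "\<forall>(u,v)\<in>E. u \<in> V \<and> v \<in> V" shows "spherical_emb V E k' r"
proof -
  obtain f c where u: "unit_dist_emb V E k f" and c: "in_Rk k c" and s: "\<forall>v\<in>V. edist k (f v) c = r"
    using assms(1) unfolding spherical_emb_def by blast
  have fin: "\<forall>v\<in>V. in_Rk k (f v)" using u unfolding unit_dist_emb_def by blast
  have ed: "\<forall>(u,v)\<in>E. edist k (f u) (f v) = 1" using u unfolding unit_dist_emb_def by blast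
  have ed': "\<forall>(u,v)\<in>E. edist k' (f u) (f v) = 1"
  proof (intro ballI, clarify)
    fix x y assume "(x,y) \<in> E"
    then show "edist k' (f x) (f y) = 1" using ed EV fin edist_mono[OF _ _ assms(2)] by fastforce
  qed
  have "unit_dist_emb V E k' f"
    using u fin ed' assms(2) unfolding unit_dist_emb_def
    by (auto simp: in_Rk_mono)
  moreover have "\<forall>v\<in>V. edist k' (f v) c = r" using s fin c edist_mono[OF _ _ assms(2)] by simp
  ultimately show ?thesis unfolding spherical_emb_def using c in_Rk_mono assms(2) by blast
qed


lemma no_R1: assumes "spherical_emb V E 1 r" "a\<in>V" "b\<in>V" "d\<in>V" "a\<noteq>b" "a\<noteq>d" "b\<noteq>d"
  shows False
proof -
  obtain f c where u: "unit_dist_emb V E 1 f" and c: "in_Rk 1 c" and s: "\<forall>v\<in>V. edist 1 (f v) c = r"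
    using assms(1) unfolding spherical_emb_def by blast
  have fin: "\<forall>v\<in>V. in_Rk 1 (f v)" and inj: "inj_on f V" using u unfolding unit_dist_emb_def by blast+
  have e: "\<bar>f v 0 - c 0\<bar> = r" if "v \<in> V" for v
    using s that unfolding edist_def by simp
  have eq: "f v = f w" if "v \<in> V" "w \<in> V" "f v 0 = f w 0" for v w
    using in_Rk_eq[of 1 "f v" "f w"] fin that by auto
  have "f a 0 = f b 0 \<or> f a 0 = f d 0 \<or> f b 0 = f d 0"
    using e[OF assms(2)] e[OF assms(3)] e[OF assms(4)] by linarith
  then show False using eq assms inj unfolding inj_on_def by metis
qed


lemma cmod_1_minus: "cmod u = 1 \<Longrightarrow> (cmod (1 - u))^2 = 2 - 2 * Re u"
proof -
  assume h: "cmod u = 1"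
  have "(Re u)^2 + (Im u)^2 = 1" using h cmod_power2[of u] by simp
  moreover have "(cmod (1 - u))^2 = (1 - Re u)^2 + (Im u)^2" using cmod_power2[of "1-u"] by simp
  ultimately show ?thesis by (simp add: power2_eq_square algebra_simps)
qed

lemma step_ratio:
  fixes a b c :: complex
  assumes "cmod a = r" "cmod b = r" "cmod c = r" "cmod (a - b) = 1" "cmod (b - c) = 1" "a \<noteq> c" "r \<noteq> 0"
  shows "b / a = c / b"
proof -
  have a0: "a \<noteq> 0" and b0: "b \<noteq> 0" using assms by auto
  define u where "u = b / a"
  define v where "v = c / b"
  have bu: "b = u * a" and cv: "c = v * b" using a0 b0 unfolding u_def v_def by auto
  have nu: "cmod u = 1" "cmod v = 1" using assms a0 b0 unfolding u_def v_def by (auto simp: norm_divide)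
  have "cmod (1 - u) = 1 / r"
  proof -
    have "cmod (a - b) = cmod a * cmod (1 - u)" by (simp add: bu norm_mult[symmetric] algebra_simps)
    then show ?thesis using assms by (simp add: field_simps)
  qed
  moreover have "cmod (1 - v) = 1 / r"
  proof -
    have "cmod (b - c) = cmod b * cmod (1 - v)" by (simp add: cv norm_mult[symmetric] algebra_simps)
    then show ?thesis using assms by (simp add: field_simps)
  qed
  ultimately have "Re u = Re v" using cmod_1_minus[OF nu(1)] cmod_1_minus[OF nu(2)] by simp
  moreover have "(Re u)^2 + (Im u)^2 = 1" "(Re v)^2 + (Im v)^2 = 1"
    using nu unfolding cmod_def by auto
  ultimately have "Im u = Im v \<or> Im u = - Im v"
    by (metis add_left_cancel power2_eq_iff)
  moreover have "\<not> (Im u = - Im v)"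
  proof
    assume h: "Im u = - Im v"
    then have "v = cnj u" using \<open>Re u = Re v\<close> by (simp add: complex_eq_iff)
    then have "c = (cnj u * u) * a" using bu cv by (simp add: algebra_simps)
    also have "cnj u * u = 1" using nu(1)
      by (metis complex_norm_square mult.commute of_real_1 power_one)
    finally show False using assms(6) by simp
  qed
  ultimately have "Im u = Im v" by blast
  then show ?thesis using \<open>Re u = Re v\<close> unfolding u_def v_def by (simp add: complex_eq_iff)
qed

lemma hex_impossible:
  fixes z0 z1 z2 z3 z4 z5 :: complex
  assumes n: "cmod z0 = r" "cmod z1 = r" "cmod z2 = r" "cmod z3 = r" "cmod z4 = r" "cmod z5 = r"
    and e: "cmod (z0 - z1) = 1" "cmod (z1 - z2) = 1" "cmod (z2 - z3) = 1" "cmod (z3 - z4) = 1"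
           "cmod (z4 - z5) = 1" "cmod (z5 - z0) = 1"
    and d: "z0 \<noteq> z2" "z1 \<noteq> z3" "z2 \<noteq> z4" "z3 \<noteq> z5" "z4 \<noteq> z0" "z5 \<noteq> z1" "z0 \<noteq> z3"
    and r: "r < 1"
  shows False
proof -
  have r0: "r \<noteq> 0" using n(1,2) e(1) by auto
  have z0: "z0 \<noteq> 0" and z1n: "z1 \<noteq> 0" and z2n: "z2 \<noteq> 0" and z3n: "z3 \<noteq> 0" and z4n: "z4 \<noteq> 0" and z5n: "z5 \<noteq> 0"
    using n r0 by auto
  define u where "u = z1 / z0"
  have s1: "z2 / z1 = u" unfolding u_def using step_ratio[OF n(1,2,3) e(1,2) d(1) r0] by simp
  have s2: "z3 / z2 = u" using step_ratio[OF n(2,3,4) e(2,3) d(2) r0] s1 by simp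
  have s3: "z4 / z3 = u" using step_ratio[OF n(3,4,5) e(3,4) d(3) r0] s2 by simp
  have s4: "z5 / z4 = u" using step_ratio[OF n(4,5,6) e(4,5) d(4) r0] s3 by simp
  have s5: "z0 / z5 = u" using step_ratio[OF n(5,6,1) e(5,6) d(5) r0] s4 by simp
  have q1: "z1 = u * z0" using z0 unfolding u_def by simp
  have q2: "z2 = u * z1" using s1 z1n by (auto simp: field_simps)
  have q3: "z3 = u * z2" using s2 z2n by (auto simp: field_simps)
  have q4: "z4 = u * z3" using s3 z3n by (auto simp: field_simps)
  have q5: "z5 = u * z4" using s4 z4n by (auto simp: field_simps)
  have q6: "z0 = u * z5" using s5 z5n by (auto simp: field_simps)
  have "z0 = u^6 * z0" using q1 q2 q3 q4 q5 q6 by (simp add: eval_nat_numeral algebra_simps)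
  then have u6: "u^6 = 1" using z0 by simp
  have u3: "u^3 \<noteq> 1" using d(7) q1 q2 q3 by (auto simp: eval_nat_numeral algebra_simps)
  have u2: "u^2 \<noteq> 1" using d(1) q1 q2 by (auto simp: eval_nat_numeral algebra_simps)
  have "(u^3 - 1) * (u + 1) * (u^2 - u + 1) = 0"
    using u6 by (simp add: algebra_simps eval_nat_numeral)
  moreover have "u + 1 \<noteq> 0"
  proof
    assume "u + 1 = 0" then have "u = -1" by (metis add_diff_cancel_right' diff_0)
    then show False using u2 by simp
  qed
  ultimately have quad: "u^2 - u + 1 = 0" using u3 by simp
  have nu: "cmod u = 1" using n(1,2) z0 r0 unfolding u_def by (simp add: norm_divide)
  have cu: "cnj u * u = 1" using nu
    by (metis complex_norm_square mult.commute of_real_1 power_one)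
  have "cnj u * (u^2 - u + 1) = u - 1 + cnj u"
    using cu by (simp add: algebra_simps power2_eq_square)
  then have "u - 1 + cnj u = 0" using quad by simp
  then have ru: "Re u = 1/2" by (simp add: complex_eq_iff)
  have "cmod (z0 - z1) = cmod z0 * cmod (1 - u)" by (simp add: q1 norm_mult[symmetric] algebra_simps)
  then have "cmod (1 - u) = 1 / r" using n e r0 by (simp add: field_simps)
  then have "(1/r)^2 = 1" using cmod_1_minus[OF nu] ru by simp
  moreover have "r > 0" using n(1) r0 by auto
  ultimately have "r^2 = 1" by (simp add: field_simps)
  moreover have "r^2 < 1" using r \<open>r > 0\<close> by (metis less_le one_power2 power_strict_mono zero_le_numeral zero_less_numeral)
  ultimately show False by simp
qed


lemma edist2: "edist 2 x y = cmod (Complex (x 0 - y 0) (x 1 - y 1))"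
  by (simp add: edist_def cmod_def numeral_2_eq_2 add.commute)

lemma cycle_EV: "n > 0 \<Longrightarrow> \<forall>(u,v)\<in>cycle_E n. u \<in> cycle_V n \<and> v \<in> cycle_V n"
  unfolding cycle_E_def cycle_V_def by auto

lemma in_cycle_E: "i < n \<Longrightarrow> (i, (i+1) mod n) \<in> cycle_E n"
  unfolding cycle_E_def by auto

lemma no_R2_C6: assumes "r < 1" shows "\<not> spherical_emb (cycle_V 6) (cycle_E 6) 2 r"
proof
  assume "spherical_emb (cycle_V 6) (cycle_E 6) 2 r"
  then obtain f c where u: "unit_dist_emb (cycle_V 6) (cycle_E 6) 2 f" and c: "in_Rk 2 c"
      and s: "\<forall>v\<in>cycle_V 6. edist 2 (f v) c = r"
    unfolding spherical_emb_def by blast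
  have fin: "\<forall>v\<in>cycle_V 6. in_Rk 2 (f v)" and inj: "inj_on f (cycle_V 6)"
    and ed: "\<forall>(u,v)\<in>cycle_E 6. edist 2 (f u) (f v) = 1"
    using u unfolding unit_dist_emb_def by blast+
  define z where "z i = Complex (f i 0 - c 0) (f i 1 - c 1)" for i
  have zn: "cmod (z i) = r" if "i < 6" for i
    using s that unfolding z_def edist2 cycle_V_def by auto
  have ze: "cmod (z i - z ((i+1) mod 6)) = 1" if "i < 6" for i
  proof -
    have "edist 2 (f i) (f ((i+1) mod 6)) = 1" using ed in_cycle_E[OF that] by fastforce
    moreover have "z i - z ((i+1) mod 6) = Complex (f i 0 - f ((i+1) mod 6) 0) (f i 1 - f ((i+1) mod 6) 1)"
      unfolding z_def by (simp add: complex_eq_iff)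
    ultimately show ?thesis unfolding edist2 by simp
  qed
  have zd: "z i \<noteq> z j" if "i < 6" "j < 6" "i \<noteq> j" for i j
  proof
    assume "z i = z j"
    then have "\<forall>k<2. f i k = f j k" unfolding z_def by (auto simp: complex_eq_iff less_2_cases_iff)
    then have "f i = f j" using in_Rk_eq fin that unfolding cycle_V_def by blast
    then show False using inj that unfolding inj_on_def cycle_V_def by blast
  qed
  have e1: "cmod (z 1 - z 2) = 1" using ze[of 1] by (simp add: numeral_2_eq_2)
  show False
    apply (rule hex_impossible[of "z 0" r "z 1" "z 2" "z 3" "z 4" "z 5"])
    using zn ze[of 0] e1 ze[of 2] ze[of 3] ze[of 4] ze[of 5] zd assms by auto
qed


lemma sph_intro:
  assumes fin: "\<forall>v\<in>V. in_Rk k (f v)" and inj: "inj_on f V"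
    and EV: "\<forall>(u,v)\<in>E. u \<in> V \<and> v \<in> V"
    and ed: "\<forall>(u,v)\<in>E. edist k (f u) (f v) = 1"
    and c: "in_Rk k c" and s: "\<forall>v\<in>V. edist k (f v) c = r"
  shows "spherical_emb V E k r"
proof -
  have "\<forall>(u,v)\<in>E. \<forall>w\<in>V. w \<noteq> u \<and> w \<noteq> v \<longrightarrow> \<not> on_segment (f w) (f u) (f v)"
  proof (intro ballI impI, clarify)
    fix u v w assume uv: "(u,v) \<in> E" and w: "w \<in> V" "w \<noteq> u" "w \<noteq> v" and sg: "on_segment (f w) (f u) (f v)"
    have V: "u \<in> V" "v \<in> V" using EV uv by auto
    have "f u \<noteq> f v"
    proof
      assume "f u = f v" then have "edist k (f u) (f v) = 0" unfolding edist_def by simp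
      then show False using ed uv by auto
    qed
    then have "f w = f u \<or> f w = f v"
      using sphere_seg[of k "f u" "f v" c r "f w"] fin V s w sg by auto
    then show False using inj w V unfolding inj_on_def by metis
  qed
  then show ?thesis unfolding spherical_emb_def unit_dist_emb_def using assms by blast
qed

definition cube :: "nat \<Rightarrow> nat \<Rightarrow> real" where
  "cube i = (\<lambda>j. if j = 0 then [0,1,1,1,0,0::real] ! i else if j = 1 then [0,0,1,1,1,0::real] ! i
      else if j = 2 then [0,0,0,1,1,1::real] ! i else 0)"

lemma sum3: fixes g :: "nat \<Rightarrow> real" shows "(\<Sum>i<3. g i) = g 0 + g 1 + g 2"
  by (simp add: eval_nat_numeral)

lemma C6_R3: "spherical_emb (cycle_V 6) (cycle_E 6) 3 (sqrt (3/4))"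
proof (rule sph_intro[where c = "\<lambda>j. if j < 3 then 1/2 else 0"])
  show "\<forall>v\<in>cycle_V 6. in_Rk 3 (cube v)" unfolding in_Rk_def cube_def by auto
  have V: "cycle_V 6 = {0,1,2,3,4,5}" unfolding cycle_V_def by auto
  show "inj_on cube (cycle_V 6)" unfolding inj_on_def
  proof (intro ballI impI)
    fix v w assume v: "v \<in> cycle_V 6" and w: "w \<in> cycle_V 6" and eq: "cube v = cube w"
    have "cube v 0 = cube w 0" "cube v 1 = cube w 1" "cube v 2 = cube w 2" using eq by auto
    then show "v = w" using v w unfolding V by (auto simp: cube_def)
  qed
  show "\<forall>(u,v)\<in>cycle_E 6. u \<in> cycle_V 6 \<and> v \<in> cycle_V 6" by (rule cycle_EV) simp
  have E: "cycle_E 6 \<subseteq> {(0,1),(1,2),(2,3),(3,4),(4,5),(5,0)}"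
  proof
    fix x assume "x \<in> cycle_E 6"
    then obtain i where x: "x = (i, (i+1) mod 6)" and i: "i < 6" unfolding cycle_E_def by blast
    have "i = 0 \<or> i = 1 \<or> i = 2 \<or> i = 3 \<or> i = 4 \<or> i = 5" using i by arith
    then show "x \<in> {(0,1),(1,2),(2,3),(3,4),(4,5),(5,0)}" using x by auto
  qed
  have "\<forall>(u,v)\<in>{(0,1),(1,2),(2,3),(3,4),(4,5),(5,0)}. edist 3 (cube u) (cube v) = 1"
    unfolding edist_def sum3 by (simp add: cube_def)
  then show "\<forall>(u,v)\<in>cycle_E 6. edist 3 (cube u) (cube v) = 1" using E by blast
  show "in_Rk 3 (\<lambda>j. if j < 3 then 1/2 else 0)" unfolding in_Rk_def by auto
  show "\<forall>v\<in>cycle_V 6. edist 3 (cube v) (\<lambda>j. if j < 3 then 1/2 else 0) = sqrt (3/4)"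
  proof
    fix v assume "v \<in> cycle_V 6"
    then have "(\<Sum>i<3. (cube v i - (if i < 3 then 1/2 else 0))^2) = 3/4"
      unfolding V sum3 by (auto simp: cube_def power2_eq_square)
    then show "edist 3 (cube v) (\<lambda>j. if j < 3 then 1/2 else 0) = sqrt (3/4)"
      unfolding edist_def by simp
  qed
qed


lemma cop_add: "coprime (k::nat) (2*k + j) \<longleftrightarrow> coprime k j"
  by (simp add: coprime_iff_gcd_eq_1 gcd_add_mult)

lemma exists_k: assumes "n \<ge> 3" "n \<noteq> 6" shows "\<exists>k::nat. coprime k n \<and> n < 6*k \<and> 2*k < n"
proof -
  have "n mod 2 = 1 \<or> n mod 4 = 0 \<or> n mod 4 = 2" by presburger
  then consider "odd n" | "n mod 4 = 0" | "n mod 4 = 2" by (auto simp: odd_iff_mod_2_eq_one)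
  then show ?thesis
  proof cases
    case 1
    define k where "k = n div 2"
    have n: "n = 2*k + 1" using 1 unfolding k_def by presburger
    have "coprime k n" unfolding n cop_add by simp
    then show ?thesis using n assms by (intro exI[of _ k]) auto
  next
    case 2
    define k where "k = n div 2 - 1"
    have n: "n = 2*k + 2" and ko: "odd k" using 2 assms unfolding k_def by presburger+
    have "coprime k n" unfolding n cop_add using ko by simp
    then show ?thesis using n assms by (intro exI[of _ k]) auto
  next
    case 3
    define k where "k = n div 2 - 2"
    have n: "n = 2*k + 4" and ko: "odd k" using 3 assms unfolding k_def by presburger+
    have c: "coprime k (2^2)" using ko by (subst coprime_power_right_iff) simp
    have f: "(4::nat) = 2^2" by simp
    have "coprime k 4" using c f by metis
    then have "coprime k n" unfolding n cop_add by simp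
    moreover have "k \<ge> 3" using 3 assms unfolding k_def by presburger
    ultimately show ?thesis using n assms by (intro exI[of _ k]) auto
  qed
qed


definition emb :: "complex \<Rightarrow> nat \<Rightarrow> real" where
  "emb z = (\<lambda>j. if j = 0 then Re z else if j = 1 then Im z else 0)"

lemma emb_in: "in_Rk 2 (emb z)" unfolding in_Rk_def emb_def by auto

lemma emb_dist: "edist 2 (emb z) (emb w) = cmod (z - w)"
  unfolding edist2 emb_def by (simp add: cmod_def)

lemma emb_inj: "emb z = emb w \<Longrightarrow> z = w"
proof -
  assume h: "emb z = emb w"
  have "emb z 0 = emb w 0" "emb z 1 = emb w 1" using h by auto
  then show "z = w" unfolding emb_def by (simp add: complex_eq_iff)
qed

lemma star_polygon:
  assumes n3: "n \<ge> 3" and cop: "coprime k n" and k1: "n < 6*k" and k2: "2*k < n"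
  shows "\<exists>r<1. spherical_emb (cycle_V n) (cycle_E n) 2 r"
proof -
  define \<theta> where "\<theta> = 2 * pi * real k / real n"
  have npos: "real n > 0" using n3 by simp
  have th1: "pi / 3 < \<theta>"
  proof -
    have "real n < 6 * real k" using k1 by linarith
    then have "pi * real n < pi * (6 * real k)" by simp
    then show ?thesis unfolding \<theta>_def using npos by (simp add: field_simps)
  qed
  have th2: "\<theta> < pi"
  proof -
    have "2 * real k < real n" using k2 by linarith
    then have "pi * (2 * real k) < pi * real n" by simp
    then show ?thesis unfolding \<theta>_def using npos by (simp add: field_simps)
  qed
  have cth: "cos \<theta> < 1/2" using cos_monotone_0_pi[of "pi/3" \<theta>] th1 th2 cos_60 by simp
  define d where "d = cmod (1 - cis \<theta>)"
  have "d^2 = 2 - 2 * cos \<theta>" unfolding d_def using cmod_1_minus[of "cis \<theta>"] by simp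
  then have d2: "d^2 > 1" using cth by simp
  have d0: "d \<ge> 0" unfolding d_def by simp
  have d1: "d > 1"
  proof (rule ccontr)
    assume "\<not> d > 1" then have "d^2 \<le> 1" using d0 by (simp add: power_le_one)
    then show False using d2 by simp
  qed
  define r where "r = 1 / d"
  have r1: "r < 1" and r0: "r > 0" unfolding r_def using d1 by auto
  define f where "f i = emb (complex_of_real r * cis (real i * \<theta>))" for i
  have ntheta: "real n * \<theta> = real k * (2 * pi)" unfolding \<theta>_def using npos by simp
  have edge: "edist 2 (f i) (f ((i+1) mod n)) = 1" if "i < n" for i
  proof -
    have cq: "cis (real ((i+1) mod n) * \<theta>) = cis (real (i+1) * \<theta>)"
    proof (cases "i + 1 < n")
      case True then show ?thesis by simp
    next
      case False
      then have "i + 1 = n" using that by simp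
      moreover have "cis (real n * \<theta>) = 1" unfolding ntheta DeMoivre[symmetric] by simp
      ultimately show ?thesis by simp
    qed
    have "cis (real (i+1) * \<theta>) = cis (real i * \<theta>) * cis \<theta>"
      by (simp add: cis_mult algebra_simps)
    then have "complex_of_real r * cis (real i * \<theta>) - complex_of_real r * cis (real ((i+1) mod n) * \<theta>)
        = complex_of_real r * cis (real i * \<theta>) * (1 - cis \<theta>)"
      using cq by (simp add: algebra_simps)
    then have "edist 2 (f i) (f ((i+1) mod n)) = r * d"
      unfolding f_def emb_dist d_def using r0 by (simp add: norm_mult)
    then show ?thesis unfolding r_def using d1 by simp
  qed
  have inj: "inj_on f (cycle_V n)"
  proof (rule inj_onI)
    fix i j assume i: "i \<in> cycle_V n" and j: "j \<in> cycle_V n" and eq: "f i = f j"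
    have "cis (real i * \<theta>) = cis (real j * \<theta>)"
      using emb_inj[OF eq[unfolded f_def]] r0 by simp
    moreover have "cis ((real i - real j) * \<theta>) = cis (real i * \<theta>) / cis (real j * \<theta>)"
      by (simp add: cis_divide left_diff_distrib)
    ultimately have "cis ((real i - real j) * \<theta>) = 1" by simp
    then have "Re (cis ((real i - real j) * \<theta>)) = 1" by simp
    then have "cos ((real i - real j) * \<theta>) = 1" by simp
    then obtain m :: int where m: "(real i - real j) * \<theta> = real_of_int m * 2 * pi"
      using cos_one_2pi_int by blast
    then have "((real i - real j) * real k) * (2 * pi) = (real_of_int m * real n) * (2 * pi)"
      unfolding \<theta>_def using npos by (simp add: field_simps)
    then have "(real i - real j) * real k = real_of_int m * real n"
      by simp
    then have "real_of_int ((int i - int j) * int k) = real_of_int (m * int n)" by simp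
    then have eqi: "(int i - int j) * int k = int n * m" by (simp only: of_int_eq_iff mult.commute)
    then have "int n dvd (int i - int j) * int k" unfolding eqi by simp
    moreover have "coprime (int n) (int k)" using cop by (simp add: coprime_commute)
    ultimately have "int n dvd (int i - int j)" using coprime_dvd_mult_left_iff by blast
    then obtain q where q: "int i - int j = int n * q" by blast
    have "\<bar>int i - int j\<bar> < int n" using i j unfolding cycle_V_def by auto
    then have "int n * \<bar>q\<bar> < int n * 1" using q by (simp add: abs_mult)
    then have "\<bar>q\<bar> < 1" using n3 by (simp only: mult_less_cancel_left)
    then have "q = 0" by simp
    then show "i = j" using q by simp
  qed
  have sph: "spherical_emb (cycle_V n) (cycle_E n) 2 r"
  proof (rule sph_intro[where c = "\<lambda>_. 0"])
    show "\<forall>v\<in>cycle_V n. in_Rk 2 (f v)" unfolding f_def using emb_in by simp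
    show "inj_on f (cycle_V n)" by (rule inj)
    show "\<forall>(u,v)\<in>cycle_E n. u \<in> cycle_V n \<and> v \<in> cycle_V n" by (rule cycle_EV) (use n3 in simp)
    show "\<forall>(u,v)\<in>cycle_E n. edist 2 (f u) (f v) = 1" unfolding cycle_E_def using edge by auto
    show "in_Rk 2 (\<lambda>_. 0)" unfolding in_Rk_def by simp
    have z: "(\<lambda>_. 0::real) = emb 0" unfolding emb_def by auto
    show "\<forall>v\<in>cycle_V n. edist 2 (f v) (\<lambda>_. 0) = r"
      unfolding z f_def emb_dist using r0 by (simp add: norm_mult)
  qed
  then show ?thesis using r1 by blast
qed


lemma lower1: assumes "n \<ge> 3" "spherical_emb (cycle_V n) (cycle_E n) y r" shows "2 \<le> y"
proof (rule ccontr)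
  assume "\<not> 2 \<le> y"
  then have "spherical_emb (cycle_V n) (cycle_E n) 1 r"
    using emb_mono[OF assms(2), of 1] cycle_EV[of n] assms(1) by simp
  then show False using no_R1[of "cycle_V n" "cycle_E n" r 0 1 2] assms(1) unfolding cycle_V_def by auto
qed

theorem mainTheorem6:
  shows "(\<forall>n::nat. n \<ge> 3 \<and> n \<noteq> 6 \<longrightarrow> sdim (cycle_V n) (cycle_E n) = 2)
         \<and> sdim (cycle_V 6) (cycle_E 6) = 3"
proof
  show "\<forall>n::nat. n \<ge> 3 \<and> n \<noteq> 6 \<longrightarrow> sdim (cycle_V n) (cycle_E n) = 2"
  proof (intro allI impI)
    fix n :: nat assume n: "n \<ge> 3 \<and> n \<noteq> 6"
    obtain k where "coprime k n" "n < 6*k" "2*k < n" using exists_k n by blast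
    then have ex: "\<exists>r<1. spherical_emb (cycle_V n) (cycle_E n) 2 r" using star_polygon n by blast
    show "sdim (cycle_V n) (cycle_E n) = 2" unfolding sdim_def
      by (rule Least_equality) (use ex lower1 n in auto)
  qed
  have ex: "\<exists>r<1. spherical_emb (cycle_V 6) (cycle_E 6) 3 r"
  proof (intro exI conjI)
    show "spherical_emb (cycle_V 6) (cycle_E 6) 3 (sqrt (3/4))" by (rule C6_R3)
    have "sqrt (3/4) < sqrt (1::real)" by (rule real_sqrt_less_mono) simp
    then show "sqrt (3/4) < (1::real)" by simp
  qed
  have lo: "3 \<le> y" if exy: "\<exists>r<1. spherical_emb (cycle_V 6) (cycle_E 6) y r" for y
  proof (rule ccontr)
    assume "\<not> 3 \<le> y"
    obtain r where r: "r < 1" "spherical_emb (cycle_V 6) (cycle_E 6) y r" using exy by blast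
    then have "spherical_emb (cycle_V 6) (cycle_E 6) 2 r"
      using emb_mono[OF r(2), of 2] cycle_EV[of 6] \<open>\<not> 3 \<le> y\<close> by simp
    then show False using no_R2_C6[OF r(1)] by simp
  qed
  show "sdim (cycle_V 6) (cycle_E 6) = 3" unfolding sdim_def
    by (rule Least_equality) (use ex lo in auto)
qed


end
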